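(* Let $\tau>0$, $\varepsilon>0$ and $A\ge\frac1{16}$. Let $\phi^0,\phi^1\in\mathcal C_{\rm per}$ with $\overline{\phi^0}=\overline{\phi^1}=0$, and let $(\phi^k)_{k\ge0}$ be the sequence generated by the scheme below. Let $C_1>0$ be a constant such that $\|\Delta_h\psi\|_2^2\ge C_1\|\psi\|_{H_h^2}^2$ for all $\psi\in\mathcal C_{\rm per}$ with $\overline\psi=0$. Set $C_0=\tilde F_h(\phi^1,\phi^0)$. Then for every $k\ge1$, $$\|\phi^k\|_{H_h^2}\le\sqrt{\frac{2(C_0+|\Omega|)}{C_1\varepsilon^2}}.$$
   Context: Let $L>0$, $N$ a positive integer, $h=L/N$, $\Omega=(0,L)^2$, $|\Omega|=L^2$. $\mathcal C_{\rm per}$ is the space of real grid functions $\phi_{i,j}$ ($i,j\in\mathbb Z$), $N$-periodic in each index, with mean $\overline\phi=\frac{h^2}{L^2}\sum_{i,j=1}^N\phi_{i,j}$. Vertex functions $g_{i+\frac12,j+\frac12}$ are periodic. Norms: $\|\phi\|_p^p=h^2\sum_{i,j=1}^N|\phi_{i,j}|^p$. Standard operators: - $D_x\phi_{i+\frac12,j}=(\phi_{i+1,j}-\phi_{i,j})/h$ and $D_y\phi_{i,j+\frac12}=(\phi_{i,j+1}-\phi_{i,j})/h$. - $\|\nabla_h\phi\|_2^2=h^2\sum_{i,j=1}^N[(D_x\phi_{i+\frac12,j})^2+(D_y\phi_{i,j+\frac12})^2]$. - $\Delta_h\phi_{i,j}=h^{-2}(\phi_{i+1,j}+\phi_{i-1,j}+\phi_{i,j+1}+\phi_{i,j-1}-4\phi_{i,j})$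 and $\Delta_h^2=\Delta_h\Delta_h$. - $\|\phi\|_{H_h^2}^2=\|\phi\|_2^2+\|\nabla_h\phi\|_2^2+\|\Delta_h\phi\|_2^2$. Center-to-vertex differences: - $\mathfrak D_x\phi_{i+\frac12,j+\frac12}=\frac1{2h}(\phi_{i+1,j+1}-\phi_{i,j+1}+\phi_{i+1,j}-\phi_{i,j})$. - $\mathfrak D_y\phi_{i+\frac12,j+\frac12}=\frac1{2h}(\phi_{i+1,j+1}-\phi_{i+1,j}+\phi_{i,j+1}-\phi_{i,j})$. - $|\nabla_h^{\mathsf v}\phi|^2=(\mathfrak D_x\phi)^2+(\mathfrak D_y\phi)^2$ and $\|\nabla_h^{\mathsf v}\phi\|_p^p=h^2\sum_{i,j=1}^N|\nabla_h^{\mathsf v}\phi|^p_{i+\frac12,j+\frac12}$. Vertex-to-center differences: - $\mathfrak d_xg_{i,j}=\frac1{2h}(g_{i+\frac12,j+\frac12}-g_{i-\frac12,j+\frac12}+g_{i+\frac12,j-\frac12}-g_{i-\frac12,j-\frac12})$. - $\mathfrak d_yg_{i,j}=\frac1{2h}(g_{i+\frac12,j+\frac12}-g_{i+\frac12,j-\frac12}+g_{i-\frac12,j+\frac12}-g_{i-\frac12,j-\frac12})$. Skew operators: - $\Delta_h^{\mathsf v}\phi=\mathfrak d_x\mathfrak D_x\phi+\mathfrak d_y\mathfrak D_y\phi$. - $\nabla_h^{\mathsf v}\cdot(|\nabla_h^{\mathsf v}\phi|^2\nabla_h^{\mathsf v}\phi)=\mathfrak d_x(r\mathfrak D_x\phi)+\mathfrak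 d_y(r\mathfrak D_y\phi)$ with $r=|\nabla_h^{\mathsf v}\phi|^2$. Energies: $$F_h(\phi)=\tfrac14\|\nabla_h^{\mathsf v}\phi\|_4^4-\tfrac12\|\nabla_h^{\mathsf v}\phi\|_2^2+\tfrac{\varepsilon^2}2\|\Delta_h\phi\|_2^2,$$ $$\tilde F_h(\phi,\psi)=F_h(\phi)+\tfrac1{4\tau}\|\phi-\psi\|_2^2+\tfrac12\|\nabla_h(\phi-\psi)\|_2^2.$$ Scheme: for $k\ge1$, $\phi^{k+1}\in\mathcal C_{\rm per}$ is the unique solution of $$\frac{3\phi^{k+1}-4\phi^k+\phi^{k-1}}{2\tau}=\nabla_h^{\mathsf v}\cdot(|\nabla_h^{\mathsf v}\phi^{k+1}|^2\nabla_h^{\mathsf v}\phi^{k+1})-\Delta_h^{\mathsf v}(2\phi^k-\phi^{k-1})-A\tau\Delta_h^2(\phi^{k+1}-\phi^k)-\varepsilon^2\Delta_h^2\phi^{k+1}.$$ *)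

theory Defs
  imports Complex_Main
begin

text \<open>Grid functions: cell-centred values phi i j at (i,j) as functions int => int => real.
 A vertex function g at vertex (i+1/2, j+1/2) is stored as g i j.\<close>

type_synonym grid = "int \<Rightarrow> int \<Rightarrow> real"

definition periodic :: "nat \<Rightarrow> grid \<Rightarrow> bool" where
  "periodic N phi \<longleftrightarrow> (\<forall>i j. phi (i + int N) j = phi i j \<and> phi i (j + int N) = phi i j)"

definition gsum :: "nat \<Rightarrow> grid \<Rightarrow> real" where
  "gsum N f = (\<Sum>i\<in>{1..int N}. \<Sum>j\<in>{1..int N}. f i j)"

definition gmean :: "nat \<Rightarrow> real \<Rightarrow> real \<Rightarrow> grid \<Rightarrow> real" where
  "gmean N h L phi = h^2 / L^2 * gsum N phi"

definition l2sq :: "nat \<Rightarrow> real \<Rightarrow> grid \<Rightarrow> real" where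
  "l2sq N h phi = h^2 * gsum N (\<lambda>i j. (phi i j)^2)"

definition Dx :: "real \<Rightarrow> grid \<Rightarrow> grid" where
  "Dx h phi i j = (phi (i+1) j - phi i j) / h"

definition Dy :: "real \<Rightarrow> grid \<Rightarrow> grid" where
  "Dy h phi i j = (phi i (j+1) - phi i j) / h"

definition gradsq :: "nat \<Rightarrow> real \<Rightarrow> grid \<Rightarrow> real" where
  "gradsq N h phi = h^2 * gsum N (\<lambda>i j. (Dx h phi i j)^2 + (Dy h phi i j)^2)"

definition lap :: "real \<Rightarrow> grid \<Rightarrow> grid" where
  "lap h phi i j = (phi (i+1) j + phi (i-1) j + phi i (j+1) + phi i (j-1) - 4 * phi i j) / h^2"

definition H2sq :: "nat \<Rightarrow> real \<Rightarrow> grid \<Rightarrow> real" where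
  "H2sq N h phi = l2sq N h phi + gradsq N h phi + l2sq N h (lap h phi)"

text \<open>Centre-to-vertex differences; the result at index (i,j) is the value at vertex (i+1/2,j+1/2).\<close>
definition VDx :: "real \<Rightarrow> grid \<Rightarrow> grid" where
  "VDx h phi i j = (phi (i+1) (j+1) - phi i (j+1) + phi (i+1) j - phi i j) / (2*h)"

definition VDy :: "real \<Rightarrow> grid \<Rightarrow> grid" where
  "VDy h phi i j = (phi (i+1) (j+1) - phi (i+1) j + phi i (j+1) - phi i j) / (2*h)"

definition vdx :: "real \<Rightarrow> grid \<Rightarrow> grid" where
  "vdx h g i j = (g i j - g (i-1) j + g i (j-1) - g (i-1) (j-1)) / (2*h)"

definition vdy :: "real \<Rightarrow> grid \<Rightarrow> grid" where
  "vdy h g i j = (g i j - g i (j-1) + g (i-1) j - g (i-1) (j-1)) / (2*h)"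

definition vgradsq :: "real \<Rightarrow> grid \<Rightarrow> grid" where
  "vgradsq h phi i j = (VDx h phi i j)^2 + (VDy h phi i j)^2"

definition vlap :: "real \<Rightarrow> grid \<Rightarrow> grid" where
  "vlap h phi i j = vdx h (VDx h phi) i j + vdy h (VDy h phi) i j"

definition vnonlin :: "real \<Rightarrow> grid \<Rightarrow> grid" where
  "vnonlin h phi i j =
     vdx h (\<lambda>a b. vgradsq h phi a b * VDx h phi a b) i j
   + vdy h (\<lambda>a b. vgradsq h phi a b * VDy h phi a b) i j"

definition vnorm4pow4 :: "nat \<Rightarrow> real \<Rightarrow> grid \<Rightarrow> real" where
  "vnorm4pow4 N h phi = h^2 * gsum N (\<lambda>i j. (vgradsq h phi i j)^2)"

definition vnorm2sq :: "nat \<Rightarrow> real \<Rightarrow> grid \<Rightarrow> real" where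
  "vnorm2sq N h phi = h^2 * gsum N (\<lambda>i j. vgradsq h phi i j)"

definition Fh :: "nat \<Rightarrow> real \<Rightarrow> real \<Rightarrow> grid \<Rightarrow> real" where
  "Fh N h eps phi = 1/4 * vnorm4pow4 N h phi - 1/2 * vnorm2sq N h phi
     + eps^2 / 2 * l2sq N h (lap h phi)"

definition Ftilde :: "nat \<Rightarrow> real \<Rightarrow> real \<Rightarrow> real \<Rightarrow> grid \<Rightarrow> grid \<Rightarrow> real" where
  "Ftilde N h eps tau phi psi = Fh N h eps phi
     + 1 / (4*tau) * l2sq N h (\<lambda>i j. phi i j - psi i j)
     + 1/2 * gradsq N h (\<lambda>i j. phi i j - psi i j)"

definition scheme_step :: "real \<Rightarrow> real \<Rightarrow> real \<Rightarrow> real \<Rightarrow> grid \<Rightarrow> grid \<Rightarrow> grid \<Rightarrow> bool" where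
  "scheme_step h eps tau A pm p pp \<longleftrightarrow>
    (\<forall>i j. (3 * pp i j - 4 * p i j + pm i j) / (2*tau)
       = vnonlin h pp i j
         - vlap h (\<lambda>a b. 2 * p a b - pm a b) i j
         - A * tau * lap h (lap h (\<lambda>a b. pp a b - p a b)) i j
         - eps^2 * lap h (lap h pp) i j)"

end

theory Submission
  imports Defs
begin


lemma sum_int_shift1:
  fixes F :: "int \<Rightarrow> real"
  shows "(\<Sum>i\<in>{1..int n}. F (i+1)) = (\<Sum>i\<in>{1..int n}. F i) - F 1 + F (int n + 1)"
proof (induction n)
  case 0 then show ?case by simp
next
  case (Suc n)
  have e: "{1..int (Suc n)} = insert (int n + 1) {1..int n}" by auto
  show ?case unfolding e using Suc by (simp add: add.commute)
qed

lemma shift1: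
  fixes F :: "int \<Rightarrow> real"
  assumes "\<And>i. F (i + int N) = F i"
  shows "(\<Sum>i\<in>{1..int N}. F (i+1)) = (\<Sum>i\<in>{1..int N}. F i)"
  using sum_int_shift1[of F N] assms[of 1] by (simp add: add.commute)

lemma shiftk:
  fixes F :: "int \<Rightarrow> real"
  assumes "\<And>i. F (i + int N) = F i"
  shows "(\<Sum>i\<in>{1..int N}. F (i+a)) = (\<Sum>i\<in>{1..int N}. F i)"
proof (induction a rule: int_induct[where k=0])
  case base then show ?case by simp
next
  case (step1 i)
  have p: "\<And>x. F (x + int N + i) = F (x + i)"
    by (metis assms add.assoc add.commute)
  have "(\<Sum>x\<in>{1..int N}. F (x + 1 + i)) = (\<Sum>x\<in>{1..int N}. F (x + i))"
    using shift1[of "\<lambda>x. F (x + i)" N, OF p] by simp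
  then show ?case using step1 by (simp add: ac_simps)
next
  case (step2 i)
  have p: "\<And>x. F (x + int N + (i - 1)) = F (x + (i - 1))"
    by (metis assms add.assoc add.commute)
  have "(\<Sum>x\<in>{1..int N}. F (x + 1 + (i - 1))) = (\<Sum>x\<in>{1..int N}. F (x + (i - 1)))"
    using shift1[of "\<lambda>x. F (x + (i - 1))" N, OF p] by simp
  then show ?case using step2 by (simp add: ac_simps)
qed

lemma per_i: "periodic N f \<Longrightarrow> f (x + int N) y = f x y" by (simp add: periodic_def)
lemma per_j: "periodic N f \<Longrightarrow> f x (y + int N) = f x y" by (simp add: periodic_def)
lemma per_i1: assumes "periodic N f" shows "f (x + int N + c) y = f (x + c) y"
proof - have "x + int N + c = (x + c) + int N" by simp
  then show ?thesis by (metis per_i[OF assms]) qed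
lemma per_i2: assumes "periodic N f" shows "f (x + int N - c) y = f (x - c) y"
proof - have "x + int N - c = (x - c) + int N" by simp
  then show ?thesis by (metis per_i[OF assms]) qed
lemma per_j1: assumes "periodic N f" shows "f x (y + int N + c) = f x (y + c)"
proof - have "y + int N + c = (y + c) + int N" by simp
  then show ?thesis by (metis per_j[OF assms]) qed
lemma per_j2: assumes "periodic N f" shows "f x (y + int N - c) = f x (y - c)"
proof - have "y + int N - c = (y - c) + int N" by simp
  then show ?thesis by (metis per_j[OF assms]) qed

lemmas perI = per_i per_j per_i1 per_i2 per_j1 per_j2

lemma gshift:
  assumes "periodic N F"
  shows "gsum N (\<lambda>i j. F (i+a) (j+b)) = gsum N F"
proof -
  have "gsum N (\<lambda>i j. F (i+a) (j+b)) = (\<Sum>i\<in>{1..int N}. \<Sum>j\<in>{1..int N}. F (i+a) j)"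
    unfolding gsum_def
    by (rule sum.cong[OF refl], rule shiftk[of "\<lambda>j. F _ j"], simp add: per_j[OF assms])
  also have "\<dots> = gsum N F" unfolding gsum_def
    by (rule shiftk[of "\<lambda>i. \<Sum>j\<in>{1..int N}. F i j"], simp add: per_i[OF assms])
  finally show ?thesis .
qed

lemma gsum_add: "gsum N (\<lambda>i j. f i j + g i j) = gsum N f + gsum N g"
  by (simp add: gsum_def sum.distrib)
lemma gsum_diff: "gsum N (\<lambda>i j. f i j - g i j) = gsum N f - gsum N g"
  by (simp add: gsum_def sum_subtractf)
lemma gsum_cmult: "gsum N (\<lambda>i j. c * f i j) = c * gsum N f"
  by (simp add: gsum_def sum_distrib_left)
lemma gsum_divide: "gsum N (\<lambda>i j. f i j / c) = gsum N f / c"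
  by (simp add: gsum_def sum_divide_distrib)
lemma gsum_uminus: "gsum N (\<lambda>i j. - f i j) = - gsum N f"
  by (simp add: gsum_def sum_negf)
lemma gsum_mono: "(\<And>i j. f i j \<le> g i j) \<Longrightarrow> gsum N f \<le> gsum N g"
  by (simp add: gsum_def sum_mono)
lemma gsum_const: "gsum N (\<lambda>i j. c) = c * (real N)^2"
  by (simp add: gsum_def power2_eq_square)
lemma gsum_cong: "(\<And>i j. f i j = g i j) \<Longrightarrow> gsum N f = gsum N g"
  by (simp add: gsum_def)

lemmas gsum_lin = gsum_add gsum_diff gsum_cmult gsum_divide gsum_uminus

lemma per_mult: assumes "periodic N f" "periodic N g" shows "periodic N (\<lambda>i j. f i j * g i j)"
  using assms unfolding periodic_def by simp
lemma per_add: assumes "periodic N f" "periodic N g" shows "periodic N (\<lambda>i j. f i j + g i j)"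
  using assms unfolding periodic_def by simp
lemma per_diff: assumes "periodic N f" "periodic N g" shows "periodic N (\<lambda>i j. f i j - g i j)"
  using assms unfolding periodic_def by simp
lemma per_cmult: assumes "periodic N f" shows "periodic N (\<lambda>i j. c * f i j)"
  using assms unfolding periodic_def by simp
lemma per_const: "periodic N (\<lambda>i j. c)"
  unfolding periodic_def by simp
lemma per_shift: assumes "periodic N f" shows "periodic N (\<lambda>i j. f (i - a) (j - b))"
  unfolding periodic_def by (simp add: perI[OF assms])
lemma per_VDx: assumes "periodic N f" shows "periodic N (VDx h f)"
  unfolding periodic_def VDx_def by (simp add: perI[OF assms])
lemma per_VDy: assumes "periodic N f" shows "periodic N (VDy h f)"
  unfolding periodic_def VDy_def by (simp add: perI[OF assms])
lemma per_Dx: assumes "periodic N f" shows "periodic N (Dx h f)"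
  unfolding periodic_def Dx_def by (simp add: perI[OF assms])
lemma per_Dy: assumes "periodic N f" shows "periodic N (Dy h f)"
  unfolding periodic_def Dy_def by (simp add: perI[OF assms])
lemma per_lap: assumes "periodic N f" shows "periodic N (lap h f)"
  unfolding periodic_def lap_def by (simp add: perI[OF assms])
lemma per_vgradsq: assumes "periodic N f" shows "periodic N (vgradsq h f)"
  unfolding periodic_def vgradsq_def VDx_def VDy_def by (simp add: perI[OF assms])

lemma gshift2:
  assumes "periodic N G" "periodic N g"
  shows "gsum N (\<lambda>i j. G (i + a) (j + b) * g i j) = gsum N (\<lambda>i j. G i j * g (i - a) (j - b))"
proof -
  have p: "periodic N (\<lambda>i j. G i j * g (i - a) (j - b))"
    by (intro per_mult per_shift assms)
  show ?thesis using gshift[OF p, of a b] by simp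
qed




lemma per_sq: "periodic N f \<Longrightarrow> periodic N (\<lambda>i j. (f i j)^2)"
  by (simp add: periodic_def)

lemma avg_sq: "((a+b)/2)^2 \<le> ((a::real)^2+b^2)/2"
proof -
  have "(a^2+b^2)/2 - ((a+b)/2)^2 = (a-b)^2/4" by (simp add: power2_eq_square field_simps)
  then show ?thesis by (smt (verit) zero_le_power2 divide_nonneg_pos)
qed

lemma sbp_vdx:
  assumes pG: "periodic N G" and pg: "periodic N g" and h: "h \<noteq> 0"
  shows "gsum N (\<lambda>i j. vdx h G i j * g i j) = - gsum N (\<lambda>i j. G i j * VDx h g i j)"
proof -
  have "(\<lambda>i j. vdx h G i j * g i j) = (\<lambda>i j. (G i j * g i j - G (i-1) j * g i j
      + G i (j-1) * g i j - G (i-1) (j-1) * g i j) / (2*h))"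
    by (intro ext) (simp add: vdx_def field_simps)
  then have l: "gsum N (\<lambda>i j. vdx h G i j * g i j) = (gsum N (\<lambda>i j. G i j * g i j)
      - gsum N (\<lambda>i j. G (i-1) j * g i j) + gsum N (\<lambda>i j. G i (j-1) * g i j)
      - gsum N (\<lambda>i j. G (i-1) (j-1) * g i j)) / (2*h)"
    by (simp only: gsum_lin)
  have "(\<lambda>i j. G i j * VDx h g i j) = (\<lambda>i j. (G i j * g (i+1) (j+1) - G i j * g i (j+1)
      + G i j * g (i+1) j - G i j * g i j) / (2*h))"
    by (intro ext) (simp add: VDx_def field_simps)
  then have r: "gsum N (\<lambda>i j. G i j * VDx h g i j) = (gsum N (\<lambda>i j. G i j * g (i+1) (j+1))
      - gsum N (\<lambda>i j. G i j * g i (j+1)) + gsum N (\<lambda>i j. G i j * g (i+1) j)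
      - gsum N (\<lambda>i j. G i j * g i j)) / (2*h)"
    by (simp only: gsum_lin)
  have s1: "gsum N (\<lambda>i j. G (i-1) j * g i j) = gsum N (\<lambda>i j. G i j * g (i+1) j)"
    using gshift2[OF pG pg, of "-1" 0] by simp
  have s2: "gsum N (\<lambda>i j. G i (j-1) * g i j) = gsum N (\<lambda>i j. G i j * g i (j+1))"
    using gshift2[OF pG pg, of 0 "-1"] by simp
  have s3: "gsum N (\<lambda>i j. G (i-1) (j-1) * g i j) = gsum N (\<lambda>i j. G i j * g (i+1) (j+1))"
    using gshift2[OF pG pg, of "-1" "-1"] by simp
  show ?thesis unfolding l r s1 s2 s3 using h by (simp add: field_simps)
qed

lemma sbp_vdy:
  assumes pG: "periodic N G" and pg: "periodic N g" and h: "h \<noteq> 0"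
  shows "gsum N (\<lambda>i j. vdy h G i j * g i j) = - gsum N (\<lambda>i j. G i j * VDy h g i j)"
proof -
  have "(\<lambda>i j. vdy h G i j * g i j) = (\<lambda>i j. (G i j * g i j - G i (j-1) * g i j
      + G (i-1) j * g i j - G (i-1) (j-1) * g i j) / (2*h))"
    by (intro ext) (simp add: vdy_def field_simps)
  then have l: "gsum N (\<lambda>i j. vdy h G i j * g i j) = (gsum N (\<lambda>i j. G i j * g i j)
      - gsum N (\<lambda>i j. G i (j-1) * g i j) + gsum N (\<lambda>i j. G (i-1) j * g i j)
      - gsum N (\<lambda>i j. G (i-1) (j-1) * g i j)) / (2*h)"
    by (simp only: gsum_lin)
  have "(\<lambda>i j. G i j * VDy h g i j) = (\<lambda>i j. (G i j * g (i+1) (j+1) - G i j * g (i+1) j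
      + G i j * g i (j+1) - G i j * g i j) / (2*h))"
    by (intro ext) (simp add: VDy_def field_simps)
  then have r: "gsum N (\<lambda>i j. G i j * VDy h g i j) = (gsum N (\<lambda>i j. G i j * g (i+1) (j+1))
      - gsum N (\<lambda>i j. G i j * g (i+1) j) + gsum N (\<lambda>i j. G i j * g i (j+1))
      - gsum N (\<lambda>i j. G i j * g i j)) / (2*h)"
    by (simp only: gsum_lin)
  have s1: "gsum N (\<lambda>i j. G (i-1) j * g i j) = gsum N (\<lambda>i j. G i j * g (i+1) j)"
    using gshift2[OF pG pg, of "-1" 0] by simp
  have s2: "gsum N (\<lambda>i j. G i (j-1) * g i j) = gsum N (\<lambda>i j. G i j * g i (j+1))"
    using gshift2[OF pG pg, of 0 "-1"] by simp
  have s3: "gsum N (\<lambda>i j. G (i-1) (j-1) * g i j) = gsum N (\<lambda>i j. G i j * g (i+1) (j+1))"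
    using gshift2[OF pG pg, of "-1" "-1"] by simp
  show ?thesis unfolding l r s1 s2 s3 using h by (simp add: field_simps)
qed

lemma sbp_lap:
  assumes pf: "periodic N f" and pg: "periodic N g" and h: "h \<noteq> 0"
  shows "gsum N (\<lambda>i j. lap h f i j * g i j)
     = - gsum N (\<lambda>i j. Dx h f i j * Dx h g i j + Dy h f i j * Dy h g i j)"
proof -
  have "(\<lambda>i j. lap h f i j * g i j) = (\<lambda>i j. (f (i+1) j * g i j + f (i-1) j * g i j
      + f i (j+1) * g i j + f i (j-1) * g i j - 4 * (f i j * g i j)) / h^2)"
    by (intro ext) (simp add: lap_def field_simps)
  then have l: "gsum N (\<lambda>i j. lap h f i j * g i j) = (gsum N (\<lambda>i j. f (i+1) j * g i j)
      + gsum N (\<lambda>i j. f (i-1) j * g i j) + gsum N (\<lambda>i j. f i (j+1) * g i j)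
      + gsum N (\<lambda>i j. f i (j-1) * g i j) - 4 * gsum N (\<lambda>i j. f i j * g i j)) / h^2"
    by (simp only: gsum_lin)
  have "(\<lambda>i j. Dx h f i j * Dx h g i j + Dy h f i j * Dy h g i j) =
     (\<lambda>i j. (f (i+1) j * g (i+1) j - f (i+1) j * g i j - f i j * g (i+1) j + f i j * g i j
       + f i (j+1) * g i (j+1) - f i (j+1) * g i j - f i j * g i (j+1) + f i j * g i j) / h^2)"
    by (intro ext) (use h in \<open>simp add: Dx_def Dy_def field_simps power2_eq_square\<close>)
  then have r: "gsum N (\<lambda>i j. Dx h f i j * Dx h g i j + Dy h f i j * Dy h g i j) =
     (gsum N (\<lambda>i j. f (i+1) j * g (i+1) j) - gsum N (\<lambda>i j. f (i+1) j * g i j)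
      - gsum N (\<lambda>i j. f i j * g (i+1) j) + gsum N (\<lambda>i j. f i j * g i j)
      + gsum N (\<lambda>i j. f i (j+1) * g i (j+1)) - gsum N (\<lambda>i j. f i (j+1) * g i j)
      - gsum N (\<lambda>i j. f i j * g i (j+1)) + gsum N (\<lambda>i j. f i j * g i j)) / h^2"
    by (simp only: gsum_lin)
  have pfg: "periodic N (\<lambda>i j. f i j * g i j)" by (rule per_mult[OF pf pg])
  have s1: "gsum N (\<lambda>i j. f (i+1) j * g (i+1) j) = gsum N (\<lambda>i j. f i j * g i j)"
    using gshift[OF pfg, of 1 0] by simp
  have s2: "gsum N (\<lambda>i j. f i (j+1) * g i (j+1)) = gsum N (\<lambda>i j. f i j * g i j)"
    using gshift[OF pfg, of 0 1] by simp
  have s3: "gsum N (\<lambda>i j. f (i-1) j * g i j) = gsum N (\<lambda>i j. f i j * g (i+1) j)"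
    using gshift2[OF pf pg, of "-1" 0] by simp
  have s4: "gsum N (\<lambda>i j. f i (j-1) * g i j) = gsum N (\<lambda>i j. f i j * g i (j+1))"
    using gshift2[OF pf pg, of 0 "-1"] by simp
  show ?thesis unfolding l r s1 s2 s3 s4 using h by (simp add: field_simps)
qed

lemma vd_le:
  assumes pf: "periodic N f" and h: "h \<noteq> 0"
  shows "gsum N (\<lambda>i j. (VDx h f i j)^2 + (VDy h f i j)^2)
       \<le> gsum N (\<lambda>i j. (Dx h f i j)^2 + (Dy h f i j)^2)"
proof -
  have pt: "(VDx h f i j)^2 + (VDy h f i j)^2 \<le> ((Dx h f i (j+1))^2 + (Dx h f i j)^2
      + (Dy h f (i+1) j)^2 + (Dy h f i j)^2) / 2" for i j
  proof -
    have a: "VDx h f i j = (Dx h f i (j+1) + Dx h f i j) / 2"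
      using h by (simp add: VDx_def Dx_def field_simps)
    have b: "VDy h f i j = (Dy h f (i+1) j + Dy h f i j) / 2"
      using h by (simp add: VDy_def Dy_def field_simps)
    show ?thesis unfolding a b using avg_sq[of "Dx h f i (j+1)" "Dx h f i j"]
      avg_sq[of "Dy h f (i+1) j" "Dy h f i j"] by (smt (verit) add_divide_distrib)
  qed
  have "gsum N (\<lambda>i j. (VDx h f i j)^2 + (VDy h f i j)^2) \<le>
     gsum N (\<lambda>i j. ((Dx h f i (j+1))^2 + (Dx h f i j)^2
      + (Dy h f (i+1) j)^2 + (Dy h f i j)^2) / 2)"
    by (rule gsum_mono, rule pt)
  also have "\<dots> = (gsum N (\<lambda>i j. (Dx h f i (j+1))^2) + gsum N (\<lambda>i j. (Dx h f i j)^2)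
      + gsum N (\<lambda>i j. (Dy h f (i+1) j)^2) + gsum N (\<lambda>i j. (Dy h f i j)^2)) / 2"
    by (simp only: gsum_lin)
  also have "gsum N (\<lambda>i j. (Dx h f i (j+1))^2) = gsum N (\<lambda>i j. (Dx h f i j)^2)"
    using gshift[OF per_sq[OF per_Dx[OF pf, where h=h]], of 0 1] by simp
  also have "gsum N (\<lambda>i j. (Dy h f (i+1) j)^2) = gsum N (\<lambda>i j. (Dy h f i j)^2)"
    using gshift[OF per_sq[OF per_Dy[OF pf, where h=h]], of 1 0] by simp
  also have "(gsum N (\<lambda>i j. (Dx h f i j)^2) + gsum N (\<lambda>i j. (Dx h f i j)^2)
      + gsum N (\<lambda>i j. (Dy h f i j)^2) + gsum N (\<lambda>i j. (Dy h f i j)^2)) / 2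
      = gsum N (\<lambda>i j. (Dx h f i j)^2 + (Dy h f i j)^2)"
    by (simp only: gsum_lin) simp
  finally show ?thesis .
qed




lemma pw1:
  fixes a1 a2 b1 b2 :: real
  shows "1/4*(a1^2+a2^2)^2 - 1/4*(b1^2+b2^2)^2
     - ((a1^2+a2^2)*a1*(a1-b1) + (a1^2+a2^2)*a2*(a2-b2)) \<le> 0"
proof -
  define s where "s = a1^2+a2^2"
  define t where "t = b1^2+b2^2"
  define q where "q = a1*b1+a2*b2"
  have s0: "s \<ge> 0" unfolding s_def by simp
  have q: "2*q \<le> s + t" unfolding s_def t_def q_def
    using zero_le_power2[of "a1-b1"] zero_le_power2[of "a2-b2"] by (simp add: power2_eq_square algebra_simps)
  have e: "(a1^2+a2^2)*a1*(a1-b1) + (a1^2+a2^2)*a2*(a2-b2) = s*(s-q)"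
    unfolding s_def q_def by (simp add: power2_eq_square algebra_simps)
  have f1: "s*(s - (s+t)/2) \<le> s*(s-q)" using s0 q by (intro mult_left_mono) auto
  have f2: "1/4*s^2 - 1/4*t^2 - s*(s-q) = -(s*(s-q) - s*(s-(s+t)/2)) - (s-t)^2/4"
    by (simp add: power2_eq_square field_simps)
  have f3: "(s-t)^2/4 \<ge> 0" by simp
  have "1/4*s^2 - 1/4*t^2 - s*(s-q) \<le> 0" unfolding f2 using f1 f3 by linarith
  then show ?thesis using e unfolding s_def[symmetric] t_def[symmetric] by simp
qed

lemma pw3:
  fixes a1 a2 b1 b2 c1 c2 :: real
  shows "- 1/2*(a1^2+a2^2) + 1/2*(b1^2+b2^2) - 1/2*((b1-c1)^2+(b2-c2)^2)
     + ((2*b1-c1)*(a1-b1) + (2*b2-c2)*(a2-b2)) \<le> 0"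
proof -
  have "- 1/2*(a1^2+a2^2) + 1/2*(b1^2+b2^2) - 1/2*((b1-c1)^2+(b2-c2)^2)
     + ((2*b1-c1)*(a1-b1) + (2*b2-c2)*(a2-b2)) = - 1/2*((a1-b1-(b1-c1))^2 + (a2-b2-(b2-c2))^2)"
    by (simp add: power2_eq_square algebra_simps)
  also have "\<dots> \<le> 0" by simp
  finally show ?thesis .
qed

lemma pw4:
  fixes d d' l tau A :: real
  assumes "tau > 0" "A \<ge> 1/16"
  shows "1/(4*tau)*d^2 - 1/(4*tau)*d'^2 - (3*d-d')/(2*tau)*d - 1/2*(l*d) - A*tau*l^2 \<le> 0"
proof -
  have e: "1/(4*tau)*d^2 - 1/(4*tau)*d'^2 - (3*d-d')/(2*tau)*d - 1/2*(l*d) - tau/16*l^2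
     = - ((4*d+tau*l)^2/(16*tau) + (d-d')^2/(4*tau))"
    using assms(1) by (simp add: power2_eq_square field_simps)
  have "(4*d+tau*l)^2/(16*tau) \<ge> 0" "(d-d')^2/(4*tau) \<ge> 0" using assms(1) by auto
  moreover have "tau/16*l^2 \<le> A*tau*l^2" using assms
    by (intro mult_right_mono) auto
  ultimately show ?thesis using e by linarith
qed

lemma pw2:
  fixes LP Lp eps :: real
  shows "eps^2/2*LP^2 - eps^2/2*Lp^2 - eps^2*(LP*(LP-Lp)) \<le> 0"
proof -
  have "eps^2/2*LP^2 - eps^2/2*Lp^2 - eps^2*(LP*(LP-Lp)) = - (eps^2/2*(LP-Lp)^2)"
    by (simp add: power2_eq_square algebra_simps)
  then show ?thesis by simp
qed

lemma pw_all:
  fixes a1 a2 b1 b2 c1 c2 LP Lp x y z tau A e :: real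
  assumes "tau > 0" "A \<ge> 1/16"
  shows "(1/4*(a1^2+a2^2)^2 - 1/2*(a1^2+a2^2) + e^2/2*LP^2 + 1/(4*tau)*(x-y)^2)
     - (1/4*(b1^2+b2^2)^2 - 1/2*(b1^2+b2^2) + e^2/2*Lp^2 + 1/(4*tau)*(y-z)^2)
     + 1/2*(-((LP - Lp)*(x-y))) - 1/2*((b1-c1)^2 + (b2-c2)^2)
     - ((3*x - 4*y + z)/(2*tau)*(x-y) + (a1^2+a2^2)*a1*(a1-b1) + (a1^2+a2^2)*a2*(a2-b2)
        - ((2*b1-c1)*(a1-b1) + (2*b2-c2)*(a2-b2)) + A*tau*((LP-Lp)*(LP-Lp)) + e^2*(LP*(LP-Lp))) \<le> 0"
proof -
  have r1: "(3*x - 4*y + z)/(2*tau)*(x-y) = (3*(x-y)-(y-z))/(2*tau)*(x-y)"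
    by (simp add: algebra_simps)
  have r2: "(LP-Lp)*(LP-Lp) = (LP-Lp)^2" by (simp add: power2_eq_square)
  have r3: "(LP - Lp)*(x-y) = (LP-Lp)*(x-y)" by simp
  show ?thesis unfolding r1 r2
    using pw1[of a1 a2 b1 b2] pw2[of e LP Lp] pw3[of a1 a2 b1 b2 c1 c2]
      pw4[OF assms, of "x-y" "y-z" "LP-Lp"] by linarith
qed




lemma VDx_diff: "h \<noteq> 0 \<Longrightarrow> VDx h (\<lambda>a b. f a b - g a b) i j = VDx h f i j - VDx h g i j"
  by (simp add: VDx_def field_simps)
lemma VDy_diff: "h \<noteq> 0 \<Longrightarrow> VDy h (\<lambda>a b. f a b - g a b) i j = VDy h f i j - VDy h g i j"
  by (simp add: VDy_def field_simps)
lemma VDx_2m: "h \<noteq> 0 \<Longrightarrow> VDx h (\<lambda>a b. 2 * f a b - g a b) i j = 2 * VDx h f i j - VDx h g i j"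
  by (simp add: VDx_def field_simps)
lemma VDy_2m: "h \<noteq> 0 \<Longrightarrow> VDy h (\<lambda>a b. 2 * f a b - g a b) i j = 2 * VDy h f i j - VDy h g i j"
  by (simp add: VDy_def field_simps)
lemma lap_diff: "h \<noteq> 0 \<Longrightarrow> lap h (\<lambda>a b. f a b - g a b) i j = lap h f i j - lap h g i j"
  by (simp add: lap_def field_simps)

lemma lap_sym:
  assumes "periodic N f" "periodic N g" "h \<noteq> 0"
  shows "gsum N (\<lambda>i j. lap h f i j * g i j) = gsum N (\<lambda>i j. f i j * lap h g i j)"
proof -
  have "gsum N (\<lambda>i j. f i j * lap h g i j) = gsum N (\<lambda>i j. lap h g i j * f i j)"
    by (rule gsum_cong) simp
  also have "\<dots> = - gsum N (\<lambda>i j. Dx h g i j * Dx h f i j + Dy h g i j * Dy h f i j)"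
    by (rule sbp_lap[OF assms(2,1,3)])
  also have "\<dots> = - gsum N (\<lambda>i j. Dx h f i j * Dx h g i j + Dy h f i j * Dy h g i j)"
    by (simp add: mult.commute)
  also have "\<dots> = gsum N (\<lambda>i j. lap h f i j * g i j)"
    by (rule sbp_lap[OF assms, symmetric])
  finally show ?thesis by simp
qed

lemma Ftilde_eq:
  "Ftilde N h eps tau x y = h^2 * gsum N (\<lambda>i j. 1/4*(vgradsq h x i j)^2 - 1/2*vgradsq h x i j
      + eps^2/2*(lap h x i j)^2 + 1/(4*tau)*(x i j - y i j)^2)
    + h^2/2 * gsum N (\<lambda>i j. (Dx h (\<lambda>a b. x a b - y a b) i j)^2 + (Dy h (\<lambda>a b. x a b - y a b) i j)^2)"
  unfolding Ftilde_def Fh_def vnorm4pow4_def vnorm2sq_def l2sq_def gradsq_def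
  by (simp only: gsum_lin) (simp add: algebra_simps)

lemma energy_step:
  assumes h: "h \<noteq> 0" and tau: "tau > 0" and A: "A \<ge> 1/16"
    and pm: "periodic N pm" and p: "periodic N p" and pp: "periodic N pp"
    and sch: "scheme_step h eps tau A pm p pp"
  shows "Ftilde N h eps tau pp p \<le> Ftilde N h eps tau p pm"
proof -
  define d where "d = (\<lambda>a b. pp a b - p a b)"
  define u where "u = (\<lambda>a b. 2 * p a b - pm a b)"
  define dd where "dd = (\<lambda>a b. p a b - pm a b)"
  define Rx where "Rx = (\<lambda>a b. vgradsq h pp a b * VDx h pp a b)"
  define Ry where "Ry = (\<lambda>a b. vgradsq h pp a b * VDy h pp a b)"
  have pd: "periodic N d" unfolding d_def by (rule per_diff[OF pp p])
  have pdd: "periodic N dd" unfolding dd_def by (rule per_diff[OF p pm])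
  have pu: "periodic N u" unfolding u_def by (rule per_diff[OF per_cmult[OF p] pm])
  have pRx: "periodic N Rx" unfolding Rx_def by (rule per_mult[OF per_vgradsq[OF pp] per_VDx[OF pp]])
  have pRy: "periodic N Ry" unfolding Ry_def by (rule per_mult[OF per_vgradsq[OF pp] per_VDy[OF pp]])
  have sch': "\<And>i j. (3 * pp i j - 4 * p i j + pm i j) / (2*tau) = vnonlin h pp i j - vlap h u i j
      - A * tau * lap h (lap h d) i j - eps^2 * lap h (lap h pp) i j"
    using sch unfolding scheme_step_def d_def u_def by blast
  have vn: "\<And>i j. vnonlin h pp i j = vdx h Rx i j + vdy h Ry i j"
    by (simp add: vnonlin_def Rx_def Ry_def)
  have vl: "\<And>i j. vlap h u i j = vdx h (VDx h u) i j + vdy h (VDy h u) i j"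
    by (simp add: vlap_def)
  have E0: "gsum N (\<lambda>i j. (3 * pp i j - 4 * p i j + pm i j) / (2*tau) * d i j)
     = gsum N (\<lambda>i j. vdx h Rx i j * d i j) + gsum N (\<lambda>i j. vdy h Ry i j * d i j)
       - (gsum N (\<lambda>i j. vdx h (VDx h u) i j * d i j) + gsum N (\<lambda>i j. vdy h (VDy h u) i j * d i j))
       - A * tau * gsum N (\<lambda>i j. lap h (lap h d) i j * d i j)
       - eps^2 * gsum N (\<lambda>i j. lap h (lap h pp) i j * d i j)"
  proof -
    have "gsum N (\<lambda>i j. (3 * pp i j - 4 * p i j + pm i j) / (2*tau) * d i j)
      = gsum N (\<lambda>i j. vdx h Rx i j * d i j + vdy h Ry i j * d i j
       - (vdx h (VDx h u) i j * d i j + vdy h (VDy h u) i j * d i j)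
       - A * tau * (lap h (lap h d) i j * d i j)
       - eps^2 * (lap h (lap h pp) i j * d i j))"
      by (rule gsum_cong) (unfold sch' vn vl, simp add: algebra_simps)
    then show ?thesis by (simp only: gsum_lin)
  qed
  have s1: "gsum N (\<lambda>i j. vdx h Rx i j * d i j) = - gsum N (\<lambda>i j. Rx i j * VDx h d i j)"
    by (rule sbp_vdx[OF pRx pd h])
  have s2: "gsum N (\<lambda>i j. vdy h Ry i j * d i j) = - gsum N (\<lambda>i j. Ry i j * VDy h d i j)"
    by (rule sbp_vdy[OF pRy pd h])
  have s3: "gsum N (\<lambda>i j. vdx h (VDx h u) i j * d i j) = - gsum N (\<lambda>i j. VDx h u i j * VDx h d i j)"
    by (rule sbp_vdx[OF per_VDx[OF pu] pd h])
  have s4: "gsum N (\<lambda>i j. vdy h (VDy h u) i j * d i j) = - gsum N (\<lambda>i j. VDy h u i j * VDy h d i j)"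
    by (rule sbp_vdy[OF per_VDy[OF pu] pd h])
  have s5: "gsum N (\<lambda>i j. lap h (lap h d) i j * d i j) = gsum N (\<lambda>i j. lap h d i j * lap h d i j)"
    by (rule lap_sym[OF per_lap[OF pd] pd h])
  have s6: "gsum N (\<lambda>i j. lap h (lap h pp) i j * d i j) = gsum N (\<lambda>i j. lap h pp i j * lap h d i j)"
    by (rule lap_sym[OF per_lap[OF pp] pd h])
  have G: "gsum N (\<lambda>i j. (Dx h d i j)^2 + (Dy h d i j)^2) = - gsum N (\<lambda>i j. lap h d i j * d i j)"
    using sbp_lap[OF pd pd h] by (simp add: power2_eq_square)
  have V: "gsum N (\<lambda>i j. (VDx h dd i j)^2 + (VDy h dd i j)^2) \<le> gsum N (\<lambda>i j. (Dx h dd i j)^2 + (Dy h dd i j)^2)"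
    by (rule vd_le[OF pdd h])
  define F0 where "F0 = (\<lambda>x y i j. 1/4*(vgradsq h x i j)^2 - 1/2*vgradsq h x i j
      + eps^2/2*(lap h x i j)^2 + 1/(4*tau)*(x i j - y i j)^2)"
  define E where "E = (\<lambda>i j. (3 * pp i j - 4 * p i j + pm i j) / (2*tau) * d i j
      + Rx i j * VDx h d i j + Ry i j * VDy h d i j
      - (VDx h u i j * VDx h d i j + VDy h u i j * VDy h d i j)
      + A * tau * (lap h d i j * lap h d i j) + eps^2 * (lap h pp i j * lap h d i j))"
  have sumE: "gsum N E = 0"
  proof -
    have "gsum N E = gsum N (\<lambda>i j. (3 * pp i j - 4 * p i j + pm i j) / (2*tau) * d i j)
      + gsum N (\<lambda>i j. Rx i j * VDx h d i j) + gsum N (\<lambda>i j. Ry i j * VDy h d i j)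
      - (gsum N (\<lambda>i j. VDx h u i j * VDx h d i j) + gsum N (\<lambda>i j. VDy h u i j * VDy h d i j))
      + A * tau * gsum N (\<lambda>i j. lap h d i j * lap h d i j)
      + eps^2 * gsum N (\<lambda>i j. lap h pp i j * lap h d i j)"
      unfolding E_def by (simp only: gsum_lin)
    then show ?thesis using E0 unfolding s1 s2 s3 s4 s5 s6 by linarith
  qed
  define W where "W = (\<lambda>i j. F0 pp p i j - F0 p pm i j + 1/2 * (- (lap h d i j * d i j))
      - 1/2 * ((VDx h dd i j)^2 + (VDy h dd i j)^2))"
  have pw: "W i j - E i j \<le> 0" for i j
  proof -
    have e1: "VDx h d i j = VDx h pp i j - VDx h p i j" unfolding d_def by (rule VDx_diff[OF h])
    have e2: "VDy h d i j = VDy h pp i j - VDy h p i j" unfolding d_def by (rule VDy_diff[OF h])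
    have e3: "VDx h dd i j = VDx h p i j - VDx h pm i j" unfolding dd_def by (rule VDx_diff[OF h])
    have e4: "VDy h dd i j = VDy h p i j - VDy h pm i j" unfolding dd_def by (rule VDy_diff[OF h])
    have e5: "VDx h u i j = 2 * VDx h p i j - VDx h pm i j" unfolding u_def by (rule VDx_2m[OF h])
    have e6: "VDy h u i j = 2 * VDy h p i j - VDy h pm i j" unfolding u_def by (rule VDy_2m[OF h])
    have e7: "lap h d i j = lap h pp i j - lap h p i j" unfolding d_def by (rule lap_diff[OF h])
    have e8: "d i j = pp i j - p i j" unfolding d_def by simp
    show ?thesis unfolding W_def E_def F0_def Rx_def Ry_def e1 e2 e3 e4 e5 e6 e7 e8 vgradsq_def
      by (rule pw_all[OF tau A])
  qed
  have "gsum N (\<lambda>i j. W i j - E i j) \<le> gsum N (\<lambda>i j. 0)"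
    using pw by (intro gsum_mono)
  then have sumW: "gsum N W \<le> 0" using sumE by (simp add: gsum_diff gsum_const)
  have Wexp: "gsum N W = gsum N (F0 pp p) - gsum N (F0 p pm) - 1/2 * gsum N (\<lambda>i j. lap h d i j * d i j)
      - 1/2 * gsum N (\<lambda>i j. (VDx h dd i j)^2 + (VDy h dd i j)^2)"
    unfolding W_def by (simp only: gsum_lin)
  have FT1: "Ftilde N h eps tau pp p = h^2 * gsum N (F0 pp p) + h^2/2 * gsum N (\<lambda>i j. (Dx h d i j)^2 + (Dy h d i j)^2)"
    unfolding Ftilde_eq F0_def d_def by simp
  have FT2: "Ftilde N h eps tau p pm = h^2 * gsum N (F0 p pm) + h^2/2 * gsum N (\<lambda>i j. (Dx h dd i j)^2 + (Dy h dd i j)^2)"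
    unfolding Ftilde_eq F0_def dd_def by simp
  have key: "gsum N (F0 pp p) + 1/2 * gsum N (\<lambda>i j. (Dx h d i j)^2 + (Dy h d i j)^2)
      \<le> gsum N (F0 p pm) + 1/2 * gsum N (\<lambda>i j. (Dx h dd i j)^2 + (Dy h dd i j)^2)"
    using sumW Wexp G V by linarith
  have "h^2 * (gsum N (F0 pp p) + 1/2 * gsum N (\<lambda>i j. (Dx h d i j)^2 + (Dy h d i j)^2))
      \<le> h^2 * (gsum N (F0 p pm) + 1/2 * gsum N (\<lambda>i j. (Dx h dd i j)^2 + (Dy h dd i j)^2))"
    by (rule mult_left_mono[OF key]) simp
  then show ?thesis unfolding FT1 FT2 by (simp add: algebra_simps)
qed




lemma VDx_const: "VDx h (\<lambda>a b. 1) i j = 0" by (simp add: VDx_def)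
lemma VDy_const: "VDy h (\<lambda>a b. 1) i j = 0" by (simp add: VDy_def)
lemma Dx_const: "Dx h (\<lambda>a b. 1) i j = 0" by (simp add: Dx_def)
lemma Dy_const: "Dy h (\<lambda>a b. 1) i j = 0" by (simp add: Dy_def)

lemma sum_vdx0: assumes "periodic N G" "h \<noteq> 0" shows "gsum N (vdx h G) = 0"
  using sbp_vdx[OF assms(1) per_const assms(2), of 1] by (simp add: VDx_const gsum_const)
lemma sum_vdy0: assumes "periodic N G" "h \<noteq> 0" shows "gsum N (vdy h G) = 0"
  using sbp_vdy[OF assms(1) per_const assms(2), of 1] by (simp add: VDy_const gsum_const)
lemma sum_lap0: assumes "periodic N f" "h \<noteq> 0" shows "gsum N (lap h f) = 0"
  using sbp_lap[OF assms(1) per_const assms(2), of 1] by (simp add: Dx_const Dy_const gsum_const)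

lemma mean_step:
  assumes h: "h \<noteq> 0" and tau: "tau > 0"
    and pm: "periodic N pm" and p: "periodic N p" and pp: "periodic N pp"
    and sch: "scheme_step h eps tau A pm p pp"
  shows "3 * gsum N pp - 4 * gsum N p + gsum N pm = 0"
proof -
  define d where "d = (\<lambda>a b. pp a b - p a b)"
  define u where "u = (\<lambda>a b. 2 * p a b - pm a b)"
  define Rx where "Rx = (\<lambda>a b. vgradsq h pp a b * VDx h pp a b)"
  define Ry where "Ry = (\<lambda>a b. vgradsq h pp a b * VDy h pp a b)"
  have pd: "periodic N d" unfolding d_def by (rule per_diff[OF pp p])
  have pu: "periodic N u" unfolding u_def by (rule per_diff[OF per_cmult[OF p] pm])
  have pRx: "periodic N Rx" unfolding Rx_def by (rule per_mult[OF per_vgradsq[OF pp] per_VDx[OF pp]])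
  have pRy: "periodic N Ry" unfolding Ry_def by (rule per_mult[OF per_vgradsq[OF pp] per_VDy[OF pp]])
  have sch': "\<And>i j. (3 * pp i j - 4 * p i j + pm i j) / (2*tau) = vnonlin h pp i j - vlap h u i j
      - A * tau * lap h (lap h d) i j - eps^2 * lap h (lap h pp) i j"
    using sch unfolding scheme_step_def d_def u_def by blast
  have vn: "\<And>i j. vnonlin h pp i j = vdx h Rx i j + vdy h Ry i j"
    by (simp add: vnonlin_def Rx_def Ry_def)
  have vl: "\<And>i j. vlap h u i j = vdx h (VDx h u) i j + vdy h (VDy h u) i j"
    by (simp add: vlap_def)
  have "gsum N (\<lambda>i j. (3 * pp i j - 4 * p i j + pm i j) / (2*tau))
    = gsum N (\<lambda>i j. vdx h Rx i j + vdy h Ry i j - (vdx h (VDx h u) i j + vdy h (VDy h u) i j)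
      - A * tau * lap h (lap h d) i j - eps^2 * lap h (lap h pp) i j)"
    by (rule gsum_cong) (unfold sch' vn vl, simp)
  also have "\<dots> = 0"
    by (simp only: gsum_lin sum_vdx0[OF pRx h] sum_vdy0[OF pRy h] sum_vdx0[OF per_VDx[OF pu] h]
       sum_vdy0[OF per_VDy[OF pu] h] sum_lap0[OF per_lap[OF pd] h] sum_lap0[OF per_lap[OF pp] h])
  finally have "(3 * gsum N pp - 4 * gsum N p + gsum N pm) / (2*tau) = 0"
    by (simp only: gsum_lin)
  then show ?thesis using tau by simp
qed

lemma gsum_sq_nonneg: "gsum N (\<lambda>i j. (f i j)^2) \<ge> 0"
  unfolding gsum_def by (intro sum_nonneg) simp

lemma Fh_le_Ftilde:
  assumes "tau > 0"
  shows "Fh N h eps x \<le> Ftilde N h eps tau x y"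
proof -
  have "l2sq N h (\<lambda>i j. x i j - y i j) \<ge> 0" unfolding l2sq_def
    by (intro mult_nonneg_nonneg gsum_sq_nonneg) simp
  moreover have "gradsq N h (\<lambda>i j. x i j - y i j) \<ge> 0" unfolding gradsq_def gsum_def
    by (intro mult_nonneg_nonneg sum_nonneg) auto
  ultimately show ?thesis unfolding Ftilde_def using assms by simp
qed

lemma Fh_lower:
  "Fh N h eps x \<ge> - (h^2 * (real N)^2) / 4 + eps^2/2 * l2sq N h (lap h x)"
proof -
  have e: "Fh N h eps x = h^2 * gsum N (\<lambda>i j. 1/4 * (vgradsq h x i j)^2 - 1/2 * vgradsq h x i j)
      + eps^2/2 * l2sq N h (lap h x)"
    unfolding Fh_def vnorm4pow4_def vnorm2sq_def by (simp only: gsum_lin) (simp add: algebra_simps)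
  have g: "gsum N (\<lambda>i j. - 1/4) \<le> gsum N (\<lambda>i j. 1/4 * (vgradsq h x i j)^2 - 1/2 * vgradsq h x i j)"
  proof (rule gsum_mono)
    fix i j
    have "1/4 * (vgradsq h x i j)^2 - 1/2 * vgradsq h x i j = 1/4 * (vgradsq h x i j - 1)^2 - 1/4"
      by (simp add: power2_eq_square algebra_simps)
    then show "- 1/4 \<le> 1/4 * (vgradsq h x i j)^2 - 1/2 * vgradsq h x i j" by simp
  qed
  have c: "h^2 * gsum N (\<lambda>i j. - 1/4) = - (h^2 * (real N)^2) / 4"
    by (simp add: gsum_const)
  have "h^2 * gsum N (\<lambda>i j. - 1/4) \<le> h^2 * gsum N (\<lambda>i j. 1/4 * (vgradsq h x i j)^2 - 1/2 * vgradsq h x i j)"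
    by (rule mult_left_mono[OF g]) simp
  then show ?thesis unfolding e c by linarith
qed




theorem mainTheorem8:
  fixes L tau eps A C1 :: real and N :: nat and phi :: "nat \<Rightarrow> grid"
  assumes "L > 0" and "N > 0"
    and "tau > 0" and "eps > 0" and "A \<ge> 1/16"
    and per: "\<And>k. periodic N (phi k)"
    and mean0: "gmean N (L / real N) L (phi 0) = 0" "gmean N (L / real N) L (phi 1) = 0"
    and scheme: "\<And>k. k \<ge> 1 \<Longrightarrow>
        scheme_step (L / real N) eps tau A (phi (k - 1)) (phi k) (phi (k + 1))"
    and "C1 > 0"
    and C1: "\<And>psi. periodic N psi \<Longrightarrow> gmean N (L / real N) L psi = 0 \<Longrightarrow>
        l2sq N (L / real N) (lap (L / real N) psi) \<ge> C1 * H2sq N (L / real N) psi"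
  shows "\<forall>k\<ge>1. sqrt (H2sq N (L / real N) (phi k))
      \<le> sqrt (2 * (Ftilde N (L / real N) eps tau (phi 1) (phi 0) + L^2) / (C1 * eps^2))"
proof -
  define h where "h = L / real N"
  define C0 where "C0 = Ftilde N h eps tau (phi 1) (phi 0)"
  have hpos: "h > 0" unfolding h_def using assms(1,2) by simp
  then have h0: "h \<noteq> 0" by simp
  have hN: "h^2 * (real N)^2 = L^2" unfolding h_def using assms(2)
    by (simp add: power_divide)
  have fac: "h^2 / L^2 \<noteq> 0" using hpos assms(1) by simp
  have sch: "\<And>k. scheme_step h eps tau A (phi k) (phi (Suc k)) (phi (Suc (Suc k)))"
    using scheme[of "Suc _"] unfolding h_def by simp
  have g0: "gsum N (phi 0) = 0" using mean0(1) fac unfolding gmean_def h_def[symmetric] by simp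
  have g1: "gsum N (phi 1) = 0" using mean0(2) fac unfolding gmean_def h_def[symmetric] by simp
  have S: "gsum N (phi k) = 0 \<and> gsum N (phi (Suc k)) = 0" for k
  proof (induction k)
    case 0 then show ?case using g0 g1 by simp
  next
    case (Suc k)
    have "3 * gsum N (phi (Suc (Suc k))) - 4 * gsum N (phi (Suc k)) + gsum N (phi k) = 0"
      by (rule mean_step[OF h0 assms(3) per per per sch])
    then show ?case using Suc by simp
  qed
  have mean: "gmean N h L (phi k) = 0" for k
    unfolding gmean_def using S[of k] by simp
  have En: "Ftilde N h eps tau (phi (Suc k)) (phi k) \<le> C0" for k
  proof (induction k)
    case 0 then show ?case unfolding C0_def by simp
  next
    case (Suc k)
    have "Ftilde N h eps tau (phi (Suc (Suc k))) (phi (Suc k)) \<le> Ftilde N h eps tau (phi (Suc k)) (phi k)"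
      by (rule energy_step[OF h0 assms(3) assms(5) per per per sch])
    then show ?case using Suc by linarith
  qed
  have main: "sqrt (H2sq N h (phi k)) \<le> sqrt (2 * (C0 + L^2) / (C1 * eps^2))" if k: "k \<ge> 1" for k
  proof -
    obtain m where m: "k = Suc m" using k by (cases k) auto
    have F1: "Fh N h eps (phi k) \<le> C0"
      using Fh_le_Ftilde[OF assms(3), where N=N and h=h and eps=eps and x="phi k" and y="phi m"] En[of m] m by simp
    have F2: "eps^2/2 * l2sq N h (lap h (phi k)) - L^2 / 4 \<le> Fh N h eps (phi k)"
      using Fh_lower[where N=N and h=h and eps=eps and x="phi k"] hN by simp
    have c: "C1 * H2sq N h (phi k) \<le> l2sq N h (lap h (phi k))"
      using C1[OF per mean[unfolded h_def]] unfolding h_def by simp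
    have l2: "eps^2 * l2sq N h (lap h (phi k)) \<le> 2 * (C0 + L^2)"
      using F1 F2 assms(1) by (simp add: algebra_simps) (use zero_le_power2[of L] in linarith)
    have e2: "eps^2 > 0" using assms(4) by simp
    have "eps^2 * (C1 * H2sq N h (phi k)) \<le> eps^2 * l2sq N h (lap h (phi k))"
      using c e2 by simp
    then have "(C1 * eps^2) * H2sq N h (phi k) \<le> 2 * (C0 + L^2)" using l2 by (simp add: algebra_simps)
    then have "H2sq N h (phi k) \<le> 2 * (C0 + L^2) / (C1 * eps^2)"
      using e2 assms(10) by (simp add: field_simps)
    then show ?thesis by (rule real_sqrt_le_mono)
  qed
  show ?thesis using main unfolding h_def C0_def by blast
qed


end
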